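(* Let $G$ be a quadrangulation graph with $n$ vertices and minimum degree $\delta(G)=3$. Let $v$ be a vertex of degree $3$ with $N(v)=\{v_1,v_2,v_3\}$, and let $v_4,v_5,v_6$ be the vertices such that $v_1vv_3v_4v_1$, $v_2vv_3v_5v_2$ and $v_1vv_2v_6v_1$ are the three faces incident to $v$. Suppose $v$ is a good vertex, i.e. none of $e_1=\{v_1,v_5\}$, $e_2=\{v_2,v_4\}$, $e_3=\{v_3,v_6\}$ is an edge of $G$. For $i\in\{1,2,3\}$ let $G_i$ be the quadrangulation graph obtained from $G$ by deleting $v$ and adding the edge $e_i$, and define \[ \mathrm{dec}(G,G_i)=\sum_{\{u,w\}\subseteq V(G)\setminus\{v\}}\bigl(d_G(u,w)-d_{G_i}(u,w)\bigr), \] the sum being over unordered pairs of distinct vertices. Then \[ \min_{i\in\{1,2,3\}} \mathrm{dec}(G,G_i)\leq \frac{(n-1)^2}{18}. \]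
   Context: A quadrangulation graph is a simple plane graph (a planar graph together with a fixed embedding in the plane) in which every face, including the unbounded one, is bounded by a cycle of length 4. $N(v)$ denotes the set of neighbours of $v$, $\delta(G)$ the minimum degree, and $d_H(u,w)$ the shortest-path distance in a graph $H$. *)

theory Defs
  imports Complex_Main
begin

definition simple_graph :: "'a set \<Rightarrow> ('a \<Rightarrow> 'a \<Rightarrow> bool) \<Rightarrow> bool" where
  "simple_graph V E \<longleftrightarrow> finite V \<and> (\<forall>x y. E x y \<longrightarrow> x \<in> V \<and> y \<in> V)
     \<and> (\<forall>x y. E x y \<longrightarrow> E y x) \<and> (\<forall>x. \<not> E x x)"

definition nbrs :: "('a \<Rightarrow> 'a \<Rightarrow> bool) \<Rightarrow> 'a \<Rightarrow> 'a set" where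
  "nbrs E x = {y. E x y}"

definition edges :: "('a \<Rightarrow> 'a \<Rightarrow> bool) \<Rightarrow> 'a set set" where
  "edges E = {{x, y} | x y. E x y}"

definition connected_graph :: "'a set \<Rightarrow> ('a \<Rightarrow> 'a \<Rightarrow> bool) \<Rightarrow> bool" where
  "connected_graph V E \<longleftrightarrow> (\<forall>u\<in>V. \<forall>w\<in>V. \<exists>k. (E ^^ k) u w)"

definition gdist :: "('a \<Rightarrow> 'a \<Rightarrow> bool) \<Rightarrow> 'a \<Rightarrow> 'a \<Rightarrow> nat" where
  "gdist E u w = (LEAST k. (E ^^ k) u w)"

text \<open>Combinatorial embedding (rotation system): for every vertex x,
  rot x is a cyclic permutation of the neighbourhood of x.\<close>

definition rotation_system :: "'a set \<Rightarrow> ('a \<Rightarrow> 'a \<Rightarrow> bool) \<Rightarrow> ('a \<Rightarrow> 'a \<Rightarrow> 'a) \<Rightarrow> bool" where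
  "rotation_system V E rot \<longleftrightarrow> (\<forall>x\<in>V. bij_betw (rot x) (nbrs E x) (nbrs E x)
      \<and> (\<forall>y\<in>nbrs E x. \<forall>z\<in>nbrs E x. \<exists>k. (rot x ^^ k) y = z))"

definition darts :: "('a \<Rightarrow> 'a \<Rightarrow> bool) \<Rightarrow> ('a \<times> 'a) set" where
  "darts E = {(u, w). E u w}"

definition fsucc :: "('a \<Rightarrow> 'a \<Rightarrow> 'a) \<Rightarrow> 'a \<times> 'a \<Rightarrow> 'a \<times> 'a" where
  "fsucc rot d = (snd d, rot (snd d) (fst d))"

definition face_of :: "('a \<Rightarrow> 'a \<Rightarrow> 'a) \<Rightarrow> 'a \<times> 'a \<Rightarrow> ('a \<times> 'a) set" where
  "face_of rot d = {(fsucc rot ^^ k) d | k. True}"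

definition faces :: "('a \<Rightarrow> 'a \<Rightarrow> bool) \<Rightarrow> ('a \<Rightarrow> 'a \<Rightarrow> 'a) \<Rightarrow> ('a \<times> 'a) set set" where
  "faces E rot = face_of rot ` darts E"

text \<open>A plane (i.e. spherical, genus 0) embedding of a connected graph:
  a rotation system satisfying Euler's formula V - E + F = 2.\<close>
definition plane_embedding :: "'a set \<Rightarrow> ('a \<Rightarrow> 'a \<Rightarrow> bool) \<Rightarrow> ('a \<Rightarrow> 'a \<Rightarrow> 'a) \<Rightarrow> bool" where
  "plane_embedding V E rot \<longleftrightarrow> simple_graph V E \<and> connected_graph V E
     \<and> rotation_system V E rot
     \<and> int (card V) - int (card (edges E)) + int (card (faces E rot)) = 2"

definition quadrangulation :: "'a set \<Rightarrow> ('a \<Rightarrow> 'a \<Rightarrow> bool) \<Rightarrow> ('a \<Rightarrow> 'a \<Rightarrow> 'a) \<Rightarrow> bool" where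
  "quadrangulation V E rot \<longleftrightarrow> plane_embedding V E rot
     \<and> (\<forall>d\<in>darts E. (fsucc rot ^^ 4) d = d
           \<and> distinct [fst d, fst (fsucc rot d), fst ((fsucc rot ^^ 2) d), fst ((fsucc rot ^^ 3) d)])"

definition face_walk :: "('a \<Rightarrow> 'a \<Rightarrow> 'a) \<Rightarrow> 'a \<Rightarrow> 'a \<Rightarrow> 'a \<Rightarrow> 'a \<Rightarrow> bool" where
  "face_walk rot a b c d \<longleftrightarrow>
     face_of rot (a, b) = {(a, b), (b, c), (c, d), (d, a)}
   \<or> face_of rot (d, c) = {(d, c), (c, b), (b, a), (a, d)}"

definition del_add :: "('a \<Rightarrow> 'a \<Rightarrow> bool) \<Rightarrow> 'a \<Rightarrow> 'a \<Rightarrow> 'a \<Rightarrow> 'a \<Rightarrow> 'a \<Rightarrow> bool" where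
  "del_add E v a b x y \<longleftrightarrow> (x \<noteq> v \<and> y \<noteq> v \<and> E x y) \<or> (x = a \<and> y = b) \<or> (x = b \<and> y = a)"

text \<open>dec(G,G') summed over unordered pairs of distinct vertices of V - {v}
  (= half the sum over ordered pairs; diagonal terms vanish).\<close>
definition dec :: "'a set \<Rightarrow> 'a \<Rightarrow> ('a \<Rightarrow> 'a \<Rightarrow> bool) \<Rightarrow> ('a \<Rightarrow> 'a \<Rightarrow> bool) \<Rightarrow> real" where
  "dec V v E E' = (\<Sum>u\<in>V - {v}. \<Sum>w\<in>V - {v}. real (gdist E u w) - real (gdist E' u w)) / 2"

end

theory Submission
  imports Defs
begin



locale qg =
  fixes V :: "'a set" and E :: "'a \<Rightarrow> 'a \<Rightarrow> bool" and rot :: "'a \<Rightarrow> 'a \<Rightarrow> 'a"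
  assumes quad: "quadrangulation V E rot"
begin

lemma sg: "simple_graph V E" using quad unfolding quadrangulation_def plane_embedding_def by blast
lemma finV: "finite V" using sg unfolding simple_graph_def by blast
lemma EV: "E x y \<Longrightarrow> x \<in> V \<and> y \<in> V" using sg unfolding simple_graph_def by blast
lemma Esym: "E x y \<Longrightarrow> E y x" using sg unfolding simple_graph_def by blast
lemma Eirr: "\<not> E x x" using sg unfolding simple_graph_def by blast
lemma conn: "u \<in> V \<Longrightarrow> w \<in> V \<Longrightarrow> \<exists>k. (E ^^ k) u w"
  using quad unfolding quadrangulation_def plane_embedding_def connected_graph_def by blast
lemma rs: "rotation_system V E rot"
  using quad unfolding quadrangulation_def plane_embedding_def by blast
lemma euler: "int (card V) - int (card (edges E)) + int (card (faces E rot)) = 2"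
  using quad unfolding quadrangulation_def plane_embedding_def by blast
lemma face4: "d \<in> darts E \<Longrightarrow> (fsucc rot ^^ 4) d = d
   \<and> distinct [fst d, fst (fsucc rot d), fst ((fsucc rot ^^ 2) d), fst ((fsucc rot ^^ 3) d)]"
  using quad unfolding quadrangulation_def by blast

lemma walkV: "(E ^^ k) x y \<Longrightarrow> x \<in> V \<Longrightarrow> y \<in> V"
  by (induction k arbitrary: y) (auto dest: EV)

lemma walk_sym: "(E ^^ k) x y \<Longrightarrow> (E ^^ k) y x"
proof (induction k arbitrary: y)
  case 0 then show ?case by auto
next
  case (Suc k)
  then obtain z where "(E ^^ k) x z" "E z y" by (auto elim: relpowp_Suc_E)
  then show ?case using Suc.IH by (meson Esym relpowp_Suc_I2)
qed

abbreviation d where "d \<equiv> gdist E"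

lemma d_le: "(E ^^ k) x y \<Longrightarrow> d x y \<le> k"
  unfolding gdist_def by (rule Least_le)

lemma d_walk: "x \<in> V \<Longrightarrow> y \<in> V \<Longrightarrow> (E ^^ d x y) x y"
  unfolding gdist_def using conn by (metis LeastI_ex)

lemma d_refl: "d x x = 0"
  using d_le[of 0 x x] by simp

lemma d_zero: "x \<in> V \<Longrightarrow> y \<in> V \<Longrightarrow> d x y = 0 \<Longrightarrow> x = y"
  using d_walk[of x y] by simp

lemma d_sym: "x \<in> V \<Longrightarrow> y \<in> V \<Longrightarrow> d x y = d y x"
  by (meson antisym d_le d_walk walk_sym)

lemma d_tri: "x \<in> V \<Longrightarrow> y \<in> V \<Longrightarrow> z \<in> V \<Longrightarrow> d x z \<le> d x y + d y z"
  by (meson d_le d_walk relpowp_trans)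

lemma d_edge: "E x y \<Longrightarrow> d x y \<le> 1"
  by (metis d_le relpowp_1)

lemma d_step: "x \<in> V \<Longrightarrow> E y z \<Longrightarrow> d x z \<le> d x y + 1"
  by (metis EV d_edge d_tri add_le_mono order_refl order_trans)


abbreviation s where "s \<equiv> fsucc rot"
abbreviation D where "D \<equiv> darts E"

lemma rot_nbr: "x \<in> V \<Longrightarrow> E x y \<Longrightarrow> E x (rot x y)"
  using rs unfolding rotation_system_def nbrs_def
  by (metis (mono_tags) bij_betw_apply mem_Collect_eq)

lemma s_dart: "p \<in> D \<Longrightarrow> s p \<in> D"
  unfolding darts_def fsucc_def using rot_nbr Esym EV by auto

lemma sk_dart: "p \<in> D \<Longrightarrow> (s ^^ k) p \<in> D"
  by (induction k) (simp_all add: s_dart)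

lemma face_eq: "p \<in> D \<Longrightarrow> face_of rot p = {p, s p, (s ^^ 2) p, (s ^^ 3) p}"
proof -
  assume p: "p \<in> D"
  have 4: "(s ^^ 4) p = p" using face4[OF p] by blast
  have "(s ^^ k) p \<in> {p, s p, (s ^^ 2) p, (s ^^ 3) p}" for k
  proof -
    have "(s ^^ k) p = (s ^^ (k mod 4)) p" using funpow_mod_eq[where f=s and n=4 and x=p and m=k] 4 by simp
    moreover have "k mod 4 < 4" by simp
    then have "k mod 4 = 0 \<or> k mod 4 = 1 \<or> k mod 4 = 2 \<or> k mod 4 = 3" by linarith
    ultimately show ?thesis by auto
  qed
  note * = this
  show ?thesis unfolding face_of_def
  proof (intro equalityI subsetI)
    fix x assume "x \<in> {(s ^^ k) p |k. True}"
    then obtain k where "x = (s ^^ k) p" by blast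
    then show "x \<in> {p, s p, (s ^^ 2) p, (s ^^ 3) p}" using * by simp
  next
    fix x assume x: "x \<in> {p, s p, (s ^^ 2) p, (s ^^ 3) p}"
    have "p = (s ^^ 0) p" "s p = (s ^^ 1) p" by auto
    then show "x \<in> {(s ^^ k) p |k. True}" using x by blast
  qed
qed

lemma face_card: "p \<in> D \<Longrightarrow> card (face_of rot p) = 4"
proof -
  assume p: "p \<in> D"
  have "distinct [fst p, fst (s p), fst ((s ^^ 2) p), fst ((s ^^ 3) p)]" using face4[OF p] by blast
  then have "distinct [p, s p, (s ^^ 2) p, (s ^^ 3) p]" by auto
  then show ?thesis using face_eq[OF p] by simp
qed

lemma face_fin: "p \<in> D \<Longrightarrow> finite (face_of rot p)"
  using face_eq by simp

lemma face_sub: "p \<in> D \<Longrightarrow> face_of rot p \<subseteq> D"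
  unfolding face_of_def using sk_dart by blast

lemma face_closed: "x \<in> face_of rot p \<Longrightarrow> s x \<in> face_of rot p"
  unfolding face_of_def by (auto, metis funpow.simps(2) comp_apply)

lemma face_closed_k: "x \<in> face_of rot p \<Longrightarrow> (s ^^ k) x \<in> face_of rot p"
  by (induction k) (simp_all add: face_closed)

lemma face_mono: "x \<in> face_of rot p \<Longrightarrow> face_of rot x \<subseteq> face_of rot p"
  unfolding face_of_def[of rot x] using face_closed_k by blast

lemma self_in_face: "p \<in> face_of rot p"
  unfolding face_of_def by (auto intro: exI[of _ 0])

lemma face_same: "p \<in> D \<Longrightarrow> x \<in> face_of rot p \<Longrightarrow> face_of rot x = face_of rot p"
proof -
  assume p: "p \<in> D" and x: "x \<in> face_of rot p"
  have xD: "x \<in> D" using face_sub[OF p] x by auto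
  have sub: "face_of rot x \<subseteq> face_of rot p" using face_mono[OF x] .
  have "card (face_of rot x) = card (face_of rot p)" using face_card p xD by simp
  then show ?thesis using sub face_fin[OF p] by (simp add: card_subset_eq)
qed

lemma face_s: "p \<in> D \<Longrightarrow> face_of rot (s p) = face_of rot p"
  using face_same face_closed self_in_face by blast

lemma face_quad:
  assumes F: "face_of rot q = {(a,b),(b,c),(c,e),(e,a)}" and y: "y \<in> face_of rot q" "y \<in> D"
  shows "face_of rot q \<subseteq> D \<and> distinct [a,b,c,e]"
proof -
  have sub: "face_of rot y \<subseteq> face_of rot q" using face_mono[OF y(1)] .
  have c4: "card (face_of rot y) = 4" using face_card[OF y(2)] .
  have fin: "finite (face_of rot q)" using F by simp
  have cq: "card (face_of rot q) \<le> 4" unfolding F using card_length[of "[(a,b),(b,c),(c,e),(e,a)]"] by simp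
  have eq: "face_of rot y = face_of rot q"
    using sub c4 cq fin by (metis antisym card_mono card_subset_eq)
  have "fst ` face_of rot y = {fst y, fst (s y), fst ((s ^^ 2) y), fst ((s ^^ 3) y)}"
    using face_eq[OF y(2)] by auto
  moreover have "distinct [fst y, fst (s y), fst ((s ^^ 2) y), fst ((s ^^ 3) y)]" using face4[OF y(2)] by blast
  ultimately have "card (fst ` face_of rot y) = 4" by simp
  then have "card {a,b,c,e} = 4" using eq F by simp
  then have "distinct [a,b,c,e]" by (intro card_distinct) simp
  moreover have "face_of rot q \<subseteq> D" using eq face_sub[OF y(2)] by simp
  ultimately show ?thesis by simp
qed

lemma face_walk_facts:
  assumes fw: "face_walk rot a b c e" and ab: "E a b"
  shows "E b c \<and> E c e \<and> E e a \<and> distinct [a,b,c,e]"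
  using fw unfolding face_walk_def
proof
  assume F: "face_of rot (a, b) = {(a, b), (b, c), (c, e), (e, a)}"
  have "(a,b) \<in> D" using ab by (simp add: darts_def)
  from face_quad[OF F self_in_face this] F show ?thesis by (auto simp: darts_def)
next
  assume F: "face_of rot (e, c) = {(e, c), (c, b), (b, a), (a, e)}"
  have "(b,a) \<in> D" using ab Esym by (simp add: darts_def)
  moreover have "(b,a) \<in> face_of rot (e,c)" using F by simp
  ultimately have "face_of rot (e, c) \<subseteq> D \<and> distinct [e,c,b,a]" using face_quad[OF F] by blast
  then show ?thesis using F Esym by (auto simp: darts_def)
qed

end



lemma change_even:
  fixes f :: "'b \<Rightarrow> bool"
  assumes fin: "finite N" and bij: "bij_betw \<sigma> N N"
  shows "even (card {y\<in>N. f y \<noteq> f (\<sigma> y)})"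
proof -
  define X where "X = {y\<in>N. f y}"
  define Y where "Y = {y\<in>N. f (\<sigma> y)}"
  have "\<sigma> ` Y = X" unfolding X_def Y_def using bij unfolding bij_betw_def by auto
  moreover have "inj_on \<sigma> Y" using bij unfolding bij_betw_def Y_def by (auto intro: inj_on_subset)
  ultimately have cXY: "card X = card Y" by (metis card_image)
  have eq: "{y\<in>N. f y \<noteq> f (\<sigma> y)} = (X - Y) \<union> (Y - X)" unfolding X_def Y_def by auto
  have fX: "finite X" "finite Y" using fin unfolding X_def Y_def by auto
  have "card ((X - Y) \<union> (Y - X)) = card (X - Y) + card (Y - X)"
    by (rule card_Un_disjoint) (use fX in auto)
  also have "card (X - Y) = card X - card (X \<inter> Y)" using fX by (simp add: card_Diff_subset_Int)
  also have "card (Y - X) = card Y - card (Y \<inter> X)" using fX by (simp add: card_Diff_subset_Int)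
  finally show ?thesis using eq cXY by (simp add: Int_commute)
qed

context qg begin

abbreviation Ed where "Ed \<equiv> edges E"
abbreviation F where "F \<equiv> faces E rot"

definition bd :: "('a \<times> 'a) set set \<Rightarrow> 'a set set" where
  "bd S = {{u,w} | u w. E u w \<and> (face_of rot (u,w) \<in> S) \<noteq> (face_of rot (w,u) \<in> S)}"

lemma bd_mem: "E u w \<Longrightarrow> {u,w} \<in> bd S \<longleftrightarrow> ((face_of rot (u,w) \<in> S) \<noteq> (face_of rot (w,u) \<in> S))"
  unfolding bd_def by (auto simp: doubleton_eq_iff)

lemma bd_sub: "bd S \<subseteq> Ed"
  unfolding bd_def edges_def by auto

lemma Ed_elem: "e \<in> Ed \<Longrightarrow> \<exists>u w. e = {u,w} \<and> E u w"
  unfolding edges_def by auto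

lemma bd_diff: "bd ((S - S') \<union> (S' - S)) = (bd S - bd S') \<union> (bd S' - bd S)"
proof -
  have sub: "(bd S - bd S') \<union> (bd S' - bd S) \<subseteq> Ed" using bd_sub by auto
  show ?thesis
  proof (intro equalityI subsetI)
    fix e assume e: "e \<in> bd ((S - S') \<union> (S' - S))"
    then obtain u w where "e = {u,w}" "E u w" using bd_sub Ed_elem by blast
    then show "e \<in> (bd S - bd S') \<union> (bd S' - bd S)" using e bd_mem by auto
  next
    fix e assume e: "e \<in> (bd S - bd S') \<union> (bd S' - bd S)"
    then obtain u w where "e = {u,w}" "E u w" using sub Ed_elem by blast
    then show "e \<in> bd ((S - S') \<union> (S' - S))" using e bd_mem by auto
  qed
qed

lemma rot_bij: "x \<in> V \<Longrightarrow> bij_betw (rot x) (nbrs E x) (nbrs E x)"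
  using rs unfolding rotation_system_def by blast

lemma rot_cyc: "x \<in> V \<Longrightarrow> y \<in> nbrs E x \<Longrightarrow> z \<in> nbrs E x \<Longrightarrow> \<exists>k. (rot x ^^ k) y = z"
  using rs unfolding rotation_system_def by blast

lemma face_swap: "E y z \<Longrightarrow> face_of rot (y,z) = face_of rot (z, rot z y)"
proof -
  assume "E y z"
  then have "(y,z) \<in> D" by (simp add: darts_def)
  from face_s[OF this] show ?thesis by (simp add: fsucc_def)
qed

lemma bd_empty:
  assumes SF: "S \<subseteq> F" and b: "bd S = {}"
  shows "S = {} \<or> S = F"
proof -
  define P where "P p = (face_of rot p \<in> S)" for p
  have sw: "E u w \<Longrightarrow> P (u,w) = P (w,u)" for u w using b bd_mem unfolding P_def by blast
  have rotc: "x \<in> V \<Longrightarrow> E x y \<Longrightarrow> P (x, rot x y) = P (x,y)" for x y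
    using face_swap[of y x] sw[of x y] Esym unfolding P_def by auto
  have const: "P (x,y) = P (x,z)" if x: "x \<in> V" and y: "E x y" and z: "E x z" for x y z
  proof -
    obtain k where k: "(rot x ^^ k) y = z" using rot_cyc[OF x, of y z] y z by (auto simp: nbrs_def)
    have "E x ((rot x ^^ j) y) \<and> P (x, (rot x ^^ j) y) = P (x,y)" for j
    proof (induction j)
      case 0 then show ?case using y by simp
    next
      case (Suc j) then show ?case using rotc[OF x] rot_nbr[OF x] by simp
    qed
    then show ?thesis using k by blast
  qed
  have all: "P p = P (x0,y0)" if p0: "(x0,y0) \<in> D" and p: "p \<in> D" for x0 y0 p
  proof -
    have E0: "E x0 y0" and x0V: "x0 \<in> V" using p0 EV by (auto simp: darts_def)
    have ind: "(E ^^ k) x0 x \<Longrightarrow> E x y \<Longrightarrow> P (x,y) = P (x0,y0)" for k x y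
    proof (induction k arbitrary: x y)
      case 0 then show ?case using const[OF x0V E0] by simp
    next
      case (Suc k)
      then obtain z where z: "(E ^^ k) x0 z" "E z x" by (auto elim: relpowp_Suc_E)
      have xV: "x \<in> V" using z EV by blast
      have "P (x,y) = P (x,z)" using const[OF xV Suc.prems(2)] z Esym by blast
      also have "\<dots> = P (z,x)" using sw z(2) by simp
      also have "\<dots> = P (x0,y0)" using Suc.IH[OF z(1) z(2)] .
      finally show ?case .
    qed
    obtain x y where pxy: "p = (x,y)" "E x y" using p by (auto simp: darts_def)
    then obtain k where "(E ^^ k) x0 x" using conn[OF x0V] EV by blast
    then show ?thesis using ind pxy by blast
  qed
  show ?thesis
  proof (cases "S = {}")
    case False
    then obtain f0 where f0: "f0 \<in> S" by blast
    then obtain p0 where p0: "p0 \<in> D" "f0 = face_of rot p0" using SF unfolding faces_def by blast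
    then obtain x0 y0 where p0e: "p0 = (x0,y0)" by (cases p0) auto
    have "F \<subseteq> S"
    proof
      fix f assume "f \<in> F"
      then obtain p where "p \<in> D" "f = face_of rot p" unfolding faces_def by blast
      then show "f \<in> S" using all[of x0 y0 p] p0 p0e f0 unfolding P_def by auto
    qed
    then show ?thesis using SF by blast
  qed simp
qed


definition deg :: "'a set set \<Rightarrow> 'a \<Rightarrow> nat" where "deg A z = card {y. {z,y} \<in> A}"
definition evenset :: "'a set set \<Rightarrow> bool" where "evenset A = (\<forall>z. even (deg A z))"

lemma Ed_iff: "{z,y} \<in> Ed \<longleftrightarrow> E z y"
  unfolding edges_def by (auto simp: doubleton_eq_iff Esym)

lemma nbrs_fin: "finite (nbrs E z)"
  using finV EV unfolding nbrs_def by (metis (no_types, lifting) finite_subset mem_Collect_eq subsetI)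

lemma bd_even: "evenset (bd S)"
  unfolding evenset_def deg_def
proof
  fix z
  show "even (card {y. {z, y} \<in> bd S})"
  proof (cases "z \<in> V")
    case False
    then have "{y. {z, y} \<in> bd S} = {}" using bd_sub Ed_iff EV by blast
    then show ?thesis by simp
  next
    case True
    have "{y. {z, y} \<in> bd S} = {y \<in> nbrs E z. (face_of rot (z,y) \<in> S) \<noteq> (face_of rot (z, rot z y) \<in> S)}"
    proof (intro equalityI subsetI)
      fix y assume y: "y \<in> {y. {z, y} \<in> bd S}"
      then have Ezy: "E z y" using bd_sub Ed_iff by blast
      then show "y \<in> {y \<in> nbrs E z. (face_of rot (z,y) \<in> S) \<noteq> (face_of rot (z, rot z y) \<in> S)}"
        using y bd_mem[OF Ezy] face_swap[of y z] Esym by (auto simp: nbrs_def)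
    next
      fix y assume y: "y \<in> {y \<in> nbrs E z. (face_of rot (z,y) \<in> S) \<noteq> (face_of rot (z, rot z y) \<in> S)}"
      then have Ezy: "E z y" by (simp add: nbrs_def)
      then show "y \<in> {y. {z, y} \<in> bd S}"
        using y bd_mem[OF Ezy] face_swap[of y z] Esym by auto
    qed
    then show ?thesis using change_even[OF nbrs_fin rot_bij[OF True]] by simp
  qed
qed

end


context qg begin

lemma finD: "finite D"
proof -
  have "D \<subseteq> V \<times> V" unfolding darts_def using EV by auto
  then show ?thesis using finV finite_subset by blast
qed

lemma Ed_img: "Ed = (\<lambda>p. {fst p, snd p}) ` D"
  unfolding edges_def darts_def by (auto simp: image_iff; force)

lemma finEd: "finite Ed" using Ed_img finD by simp

lemma finF: "finite F" unfolding faces_def using finD by simp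

lemma F_card: "f \<in> F \<Longrightarrow> card f = 4"
  unfolding faces_def using face_card by auto

lemma F_fin': "f \<in> F \<Longrightarrow> finite f"
  unfolding faces_def using face_fin by auto

lemma F_disj: "pairwise disjnt F"
  unfolding pairwise_def disjnt_def
proof (intro ballI impI)
  fix f1 f2 assume f: "f1 \<in> F" "f2 \<in> F" "f1 \<noteq> f2"
  then obtain p1 p2 where p: "p1 \<in> D" "f1 = face_of rot p1" "p2 \<in> D" "f2 = face_of rot p2"
    unfolding faces_def by blast
  show "f1 \<inter> f2 = {}"
  proof (rule ccontr)
    assume "f1 \<inter> f2 \<noteq> {}"
    then obtain x where "x \<in> f1" "x \<in> f2" by blast
    then show False using face_same p f(3) by metis
  qed
qed

lemma DS_eq: "S \<subseteq> F \<Longrightarrow> {p\<in>D. face_of rot p \<in> S} = \<Union>S"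
proof (intro equalityI subsetI)
  fix p assume "p \<in> {p\<in>D. face_of rot p \<in> S}"
  then show "p \<in> \<Union>S" using self_in_face by blast
next
  fix p assume S: "S \<subseteq> F" and p: "p \<in> \<Union>S"
  then obtain f where f: "f \<in> S" "p \<in> f" by blast
  then obtain q where q: "q \<in> D" "f = face_of rot q" using S unfolding faces_def by blast
  then have "p \<in> D" "face_of rot p = f" using face_sub[OF q(1)] face_same[OF q(1)] f(2) by auto
  then show "p \<in> {p\<in>D. face_of rot p \<in> S}" using f by simp
qed

lemma DS_card: "S \<subseteq> F \<Longrightarrow> card {p\<in>D. face_of rot p \<in> S} = 4 * card S"
proof -
  assume S: "S \<subseteq> F"
  have "card (\<Union>S) = sum card S"
    by (rule card_Union_disjoint[OF pairwise_subset[OF F_disj S]]) (use S F_fin' in blast)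
  also have "\<dots> = sum (\<lambda>_. 4) S" using S F_card by (intro sum.cong) auto
  finally show ?thesis using DS_eq[OF S] by simp
qed

lemma bd_card_even:
  assumes S: "S \<subseteq> F" shows "even (card (bd S))"
proof -
  define DS where "DS = {p\<in>D. face_of rot p \<in> S}"
  define g where "g p = {fst p, snd p}" for p :: "'a \<times> 'a"
  define c where "c e = card {p\<in>DS. g p = e}" for e
  have "DS = (\<Union>e\<in>Ed. {p\<in>DS. g p = e})" unfolding DS_def g_def using Ed_img by auto
  moreover have "card (\<Union>e\<in>Ed. {p\<in>DS. g p = e}) = (\<Sum>e\<in>Ed. card {p\<in>DS. g p = e})"
    by (rule card_UN_disjoint) (use finEd finD in \<open>auto simp: DS_def\<close>)
  ultimately have "card DS = (\<Sum>e\<in>Ed. c e)" unfolding c_def by simp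
  moreover have "even (card DS)" using DS_card[OF S] unfolding DS_def by simp
  ultimately have "even (card {e\<in>Ed. odd (c e)})" using even_sum_iff[OF finEd] by metis
  moreover have "{e\<in>Ed. odd (c e)} = bd S"
  proof (intro equalityI subsetI)
    fix e assume e: "e \<in> {e\<in>Ed. odd (c e)}"
    then obtain u w where uw: "e = {u,w}" "E u w" using Ed_elem by blast
    have ne: "u \<noteq> w" using uw Eirr by blast
    have "{p\<in>DS. g p = e} = ({(u,w)} \<inter> DS) \<union> ({(w,u)} \<inter> DS)"
      unfolding g_def uw by (auto simp: doubleton_eq_iff)
    then have "c e = card (({(u,w)} \<inter> DS) \<union> ({(w,u)} \<inter> DS))" unfolding c_def by simp
    also have "\<dots> = card ({(u,w)} \<inter> DS) + card ({(w,u)} \<inter> DS)"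
      by (rule card_Un_disjoint) (use ne in auto)
    finally have "c e = card ({(u,w)} \<inter> DS) + card ({(w,u)} \<inter> DS)" .
    moreover have "(u,w) \<in> DS \<longleftrightarrow> face_of rot (u,w) \<in> S" "(w,u) \<in> DS \<longleftrightarrow> face_of rot (w,u) \<in> S"
      unfolding DS_def darts_def using uw Esym by auto
    ultimately show "e \<in> bd S" using e uw bd_mem[OF uw(2)]
      by (cases "(u,w) \<in> DS"; cases "(w,u) \<in> DS"; simp)
  next
    fix e assume e: "e \<in> bd S"
    then obtain u w where uw: "e = {u,w}" "E u w" using Ed_elem bd_sub by blast
    have ne: "u \<noteq> w" using uw Eirr by blast
    have "{p\<in>DS. g p = e} = ({(u,w)} \<inter> DS) \<union> ({(w,u)} \<inter> DS)"
      unfolding g_def uw by (auto simp: doubleton_eq_iff)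
    then have "c e = card (({(u,w)} \<inter> DS) \<union> ({(w,u)} \<inter> DS))" unfolding c_def by simp
    also have "\<dots> = card ({(u,w)} \<inter> DS) + card ({(w,u)} \<inter> DS)"
      by (rule card_Un_disjoint) (use ne in auto)
    finally have "c e = card ({(u,w)} \<inter> DS) + card ({(w,u)} \<inter> DS)" .
    moreover have "(u,w) \<in> DS \<longleftrightarrow> face_of rot (u,w) \<in> S" "(w,u) \<in> DS \<longleftrightarrow> face_of rot (w,u) \<in> S"
      unfolding DS_def darts_def using uw Esym by auto
    ultimately show "e \<in> {e\<in>Ed. odd (c e)}" using e uw bd_mem[OF uw(2)] bd_sub
      by (cases "(u,w) \<in> DS"; cases "(w,u) \<in> DS"; auto)
  qed
  ultimately show ?thesis by simp
qed

end



locale qgr = qg + fixes r assumes rV: "r \<in> V"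
begin

abbreviation dr where "dr x \<equiv> d r x"

definition par where "par x = (SOME z. E x z \<and> dr z + 1 = dr x)"

lemma par_ex: "x \<in> V \<Longrightarrow> x \<noteq> r \<Longrightarrow> \<exists>z. E x z \<and> dr z + 1 = dr x"
proof -
  assume x: "x \<in> V" "x \<noteq> r"
  have "dr x \<noteq> 0" using d_zero[OF rV x(1)] x(2) by auto
  then obtain m where m: "dr x = Suc m" by (cases "dr x") auto
  have "(E ^^ Suc m) r x" using d_walk[OF rV x(1)] m by simp
  then obtain z where z: "(E ^^ m) r z" "E z x" by (auto elim: relpowp_Suc_E)
  have "dr z \<le> m" using d_le[OF z(1)] .
  moreover have "dr x \<le> dr z + 1" using d_step[OF rV z(2)] .
  ultimately have "dr z + 1 = dr x" using m by linarith
  then show ?thesis using z(2) Esym by blast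
qed

lemma par_prop: "x \<in> V \<Longrightarrow> x \<noteq> r \<Longrightarrow> E x (par x) \<and> dr (par x) + 1 = dr x"
  unfolding par_def using par_ex by (rule someI_ex)

definition T where "T = (\<lambda>x. {x, par x}) ` (V - {r})"

lemma T_sub: "T \<subseteq> Ed"
  unfolding T_def using par_prop Ed_iff by auto

lemma T_card: "card T = card V - 1"
proof -
  have "inj_on (\<lambda>x. {x, par x}) (V - {r})"
  proof (rule inj_onI)
    fix x y assume x: "x \<in> V - {r}" and y: "y \<in> V - {r}" and eq: "{x, par x} = {y, par y}"
    show "x = y"
    proof (rule ccontr)
      assume "x \<noteq> y"
      then have "x = par y" "y = par x" using eq by (auto simp: doubleton_eq_iff)
      then have "dr y + 1 = dr x" "dr x + 1 = dr y" using par_prop[of x] par_prop[of y] x y by auto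
      then show False by simp
    qed
  qed
  then show ?thesis unfolding T_def using rV finV by (simp add: card_image)
qed

lemma tree_even:
  assumes B: "B \<subseteq> T" and ev: "evenset B"
  shows "B = {}"
proof (rule ccontr)
  assume ne: "B \<noteq> {}"
  define U where "U = \<Union>B"
  have UV: "U \<subseteq> V" unfolding U_def using B T_sub Ed_elem EV by blast
  have finU: "finite U" using UV finV finite_subset by blast
  have Une: "U \<noteq> {}"
  proof -
    obtain e where e: "e \<in> B" using ne by blast
    then obtain y where "e = {y, par y}" using B unfolding T_def by blast
    then show ?thesis using e unfolding U_def by blast
  qed
  define m where "m = Max (dr ` U)"
  have "m \<in> dr ` U" unfolding m_def using finU Une by simp
  then obtain x where xU: "x \<in> U" and xm: "dr x = m" by blast
  have maxi: "y \<in> U \<Longrightarrow> dr y \<le> dr x" for y using finU xm unfolding m_def by simp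
  have Bform: "e \<in> B \<Longrightarrow> \<exists>y. y \<in> V - {r} \<and> e = {y, par y}" for e using B unfolding T_def by blast
  have key: "e \<in> B \<Longrightarrow> x \<in> e \<Longrightarrow> e = {x, par x} \<and> x \<in> V - {r}" for e
  proof -
    assume e: "e \<in> B" "x \<in> e"
    then obtain y where y: "y \<in> V - {r}" "e = {y, par y}" using Bform by blast
    have "y \<in> U" using e y unfolding U_def by blast
    then have "dr y \<le> dr x" using maxi by blast
    moreover have "dr (par y) + 1 = dr y" using par_prop y by blast
    ultimately have "x \<noteq> par y" by auto
    then have "x = y" using e y by auto
    then show ?thesis using y by simp
  qed
  obtain e0 where "e0 \<in> B" "x \<in> e0" using xU unfolding U_def by blast
  then have e0: "{x, par x} \<in> B" and xr: "x \<in> V - {r}" using key by auto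
  have "{w. {x,w} \<in> B} = {par x}"
  proof (intro equalityI subsetI)
    fix w assume "w \<in> {w. {x,w} \<in> B}"
    then have "{x,w} = {x, par x}" using key by blast
    moreover have "par x \<noteq> x" using par_prop xr by force
    ultimately show "w \<in> {par x}" by (auto simp: doubleton_eq_iff)
  qed (use e0 in auto)
  then have "deg B x = 1" unfolding deg_def by simp
  then show False using ev unfolding evenset_def by (metis odd_one)
qed

definition L where "L = {z\<in>V. odd (dr z)}"

lemma deg_alt: "A \<subseteq> Ed \<Longrightarrow> deg A z = card {e\<in>A. z \<in> e}"
proof -
  assume A: "A \<subseteq> Ed"
  have inj: "inj_on (\<lambda>y. {z,y}) {y. {z,y} \<in> A}" by (rule inj_onI) (auto simp: doubleton_eq_iff)
  have img: "(\<lambda>y. {z,y}) ` {y. {z,y} \<in> A} = {e\<in>A. z \<in> e}"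
  proof (intro equalityI subsetI)
    fix e assume e: "e \<in> {e\<in>A. z \<in> e}"
    then obtain u w where "e = {u,w}" using A Ed_elem by blast
    then have "e = {z,w} \<or> e = {z,u}" using e by auto
    then show "e \<in> (\<lambda>y. {z,y}) ` {y. {z,y} \<in> A}" using e by auto
  qed auto
  show ?thesis unfolding deg_def using card_image[OF inj] img by simp
qed

lemma level_even:
  assumes A: "A \<subseteq> Ed" and ev: "evenset A"
  shows "even (card {e\<in>A. odd (card (e \<inter> L))})"
proof -
  have finA: "finite A" using A finEd finite_subset by blast
  have finL: "finite L" unfolding L_def using finV by simp
  have dz: "deg A z = (\<Sum>e\<in>A. of_bool (z \<in> e))" for z
  proof -
    have "{e\<in>A. z \<in> e} = A \<inter> {e. z \<in> e}" by blast
    then show ?thesis using deg_alt[OF A, of z] finA by (simp add: Int_def)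
  qed
  have cz: "card (e \<inter> L) = (\<Sum>z\<in>L. of_bool (z \<in> e))" for e
  proof -
    have "e \<inter> L = L \<inter> {z. z \<in> e}" by blast
    then show ?thesis using finL by (simp add: Int_def conj_commute)
  qed
  have "(\<Sum>z\<in>L. deg A z) = (\<Sum>z\<in>L. \<Sum>e\<in>A. of_bool (z \<in> e))"
    by (simp only: dz)
  also have "\<dots> = (\<Sum>e\<in>A. \<Sum>z\<in>L. of_bool (z \<in> e))" by (rule sum.swap)
  also have "\<dots> = (\<Sum>e\<in>A. card (e \<inter> L))"
    by (simp only: cz)
  finally have eq: "(\<Sum>z\<in>L. deg A z) = (\<Sum>e\<in>A. card (e \<inter> L))" .
  have "even (\<Sum>z\<in>L. deg A z)" using ev unfolding evenset_def by (intro dvd_sum) auto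
  then show ?thesis using eq even_sum_iff[OF finA, of "\<lambda>e. card (e \<inter> L)"] by simp
qed

lemma T_good: "e \<in> T \<Longrightarrow> card (e \<inter> L) = 1"
proof -
  assume "e \<in> T"
  then obtain x where x: "x \<in> V - {r}" "e = {x, par x}" unfolding T_def by blast
  have p: "E x (par x)" "dr (par x) + 1 = dr x" using par_prop x by auto
  have pV: "par x \<in> V" using p EV by blast
  have par_odd: "odd (dr x) \<longleftrightarrow> even (dr (par x))" using p(2) by (metis even_Suc Suc_eq_plus1)
  have xL: "x \<in> L \<longleftrightarrow> odd (dr x)" using x unfolding L_def by simp
  have pL: "par x \<in> L \<longleftrightarrow> odd (dr (par x))" using pV unfolding L_def by simp
  have ne: "x \<noteq> par x" using p(1) Eirr by metis
  have "e \<inter> L = (if odd (dr x) then {x} else {par x})"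
    unfolding x(2) using xL pL par_odd ne by (cases "odd (dr x)") auto
  then show ?thesis by simp
qed

end


context qgr begin

lemma fiber_le: "card (Pow F) \<le> 2 * card (bd ` Pow F)"
proof -
  have fin: "finite (bd ` Pow F)" using finF by simp
  have "Pow F = (\<Union>A\<in>bd ` Pow F. {S\<in>Pow F. bd S = A})" by blast
  then have "card (Pow F) \<le> (\<Sum>A\<in>bd ` Pow F. card {S\<in>Pow F. bd S = A})"
    using card_UN_le[OF fin, of "\<lambda>A. {S\<in>Pow F. bd S = A}"] by simp
  also have "\<dots> \<le> (\<Sum>A\<in>bd ` Pow F. 2)"
  proof (rule sum_mono)
    fix A assume "A \<in> bd ` Pow F"
    then obtain S0 where S0: "S0 \<subseteq> F" "A = bd S0" by blast
    have "{S\<in>Pow F. bd S = A} \<subseteq> {S0, F - S0}"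
    proof
      fix S assume S: "S \<in> {S\<in>Pow F. bd S = A}"
      have "bd ((S - S0) \<union> (S0 - S)) = {}" using bd_diff S S0 by auto
      moreover have "(S - S0) \<union> (S0 - S) \<subseteq> F" using S S0 by auto
      ultimately have "(S - S0) \<union> (S0 - S) = {} \<or> (S - S0) \<union> (S0 - S) = F" using bd_empty by blast
      then show "S \<in> {S0, F - S0}" using S S0 by blast
    qed
    then have "card {S\<in>Pow F. bd S = A} \<le> card {S0, F - S0}" by (rule card_mono[rotated]) simp
    also have "\<dots> \<le> 2" by (simp add: card_insert_if)
    finally show "card {S\<in>Pow F. bd S = A} \<le> 2" .
  qed
  finally show ?thesis by simp
qed

lemma surj_T: "Z \<subseteq> Ed - T \<Longrightarrow> \<exists>S\<subseteq>F. bd S - T = Z"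
proof -
  assume Z: "Z \<subseteq> Ed - T"
  define Img where "Img = bd ` Pow F"
  define \<phi> where "\<phi> A = A - T" for A
  have inj: "inj_on \<phi> Img"
  proof (rule inj_onI)
    fix A A' assume A: "A \<in> Img" and A': "A' \<in> Img" and eq: "\<phi> A = \<phi> A'"
    obtain S S' where S: "A = bd S" "A' = bd S'" using A A' unfolding Img_def by blast
    have "bd ((S - S') \<union> (S' - S)) = (A - A') \<union> (A' - A)" using bd_diff S by simp
    moreover have "(A - A') \<union> (A' - A) \<subseteq> T" using eq unfolding \<phi>_def by blast
    ultimately have "(A - A') \<union> (A' - A) = {}" using tree_even bd_even by metis
    then show "A = A'" by blast
  qed
  have sub: "\<phi> ` Img \<subseteq> Pow (Ed - T)" unfolding \<phi>_def Img_def using bd_sub by blast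
  have finP: "finite (Pow (Ed - T))" using finEd by simp
  have c1: "card Img \<le> card (Pow (Ed - T))"
    using card_mono[OF finP sub] card_image[OF inj] by simp
  have cT: "card T \<le> card Ed" using card_mono[OF finEd T_sub] .
  have cP: "card (Pow (Ed - T)) = 2 ^ (card Ed - card T)"
    using finEd T_sub by (simp add: card_Pow card_Diff_subset finite_subset)
  have V1: "card V \<ge> 1" using rV finV by (metis One_nat_def Suc_leI card_gt_0_iff empty_iff)
  have "int (card F) = int (card Ed - card T) + 1"
    using euler T_card V1 cT by linarith
  then have cF: "card F = (card Ed - card T) + 1" by linarith
  have "card (Pow F) = 2 * 2 ^ (card Ed - card T)" using cF finF by (simp add: card_Pow)
  then have "card (Pow (Ed - T)) \<le> card Img" using fiber_le cP unfolding Img_def by simp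
  then have "card (\<phi> ` Img) = card (Pow (Ed - T))" using c1 card_image[OF inj] by simp
  then have "\<phi> ` Img = Pow (Ed - T)" using card_subset_eq[OF finP sub] by simp
  then have "Z \<in> \<phi> ` Img" using Z by blast
  then show ?thesis unfolding \<phi>_def Img_def by blast
qed

theorem bipartite: "E x y \<Longrightarrow> odd (dr x) \<noteq> odd (dr y)"
proof (rule ccontr)
  assume xy: "E x y" and same: "\<not> odd (dr x) \<noteq> odd (dr y)"
  define e where "e = {x,y}"
  have ne: "x \<noteq> y" using xy Eirr by metis
  have xV: "x \<in> V" "y \<in> V" using xy EV by auto
  have eL: "even (card (e \<inter> L))"
  proof (cases "odd (dr x)")
    case True
    then have "e \<inter> L = {x,y}" using same xV unfolding e_def L_def by auto
    then show ?thesis using ne by simp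
  next
    case False
    then have "e \<inter> L = {}" using same xV unfolding e_def L_def by auto
    then show ?thesis by simp
  qed
  have eT: "e \<notin> T" using eL T_good by force
  have eEd: "e \<in> Ed" unfolding e_def using xy Ed_iff by simp
  obtain S where S: "S \<subseteq> F" "bd S - T = {e}" using surj_T[of "{e}"] eT eEd by blast
  define A where "A = bd S"
  have eA: "e \<in> A" using S unfolding A_def by blast
  have finA: "finite A" unfolding A_def using bd_sub finEd finite_subset by blast
  have evA: "even (card A)" unfolding A_def using bd_card_even[OF S(1)] .
  have "{e'\<in>A. odd (card (e' \<inter> L))} = A - {e}"
  proof (intro equalityI subsetI)
    fix e' assume "e' \<in> {e'\<in>A. odd (card (e' \<inter> L))}"
    then show "e' \<in> A - {e}" using eL by auto
  next
    fix e' assume e': "e' \<in> A - {e}"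
    then have "e' \<in> T" using S unfolding A_def by blast
    then show "e' \<in> {e'\<in>A. odd (card (e' \<inter> L))}" using e' T_good by simp
  qed
  moreover have "even (card {e'\<in>A. odd (card (e' \<inter> L))})"
    using level_even[of A] bd_sub bd_even unfolding A_def by blast
  ultimately have "even (card (A - {e}))" by simp
  moreover have "card (A - {e}) = card A - 1" using eA finA by simp
  moreover have "card A \<ge> 1" using eA finA by (metis One_nat_def Suc_leI card_gt_0_iff empty_iff)
  ultimately show False using evA by (metis dvd_diff_nat even_add odd_one le_add_diff_inverse2 diff_add_inverse2 odd_add)
qed

end



lemma walk_sym_gen:
  assumes sym: "\<And>x y. R x y \<Longrightarrow> R y x"
  shows "(R ^^ k) x y \<Longrightarrow> (R ^^ k) y x"
proof (induction k arbitrary: y)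
  case 0 then show ?case by auto
next
  case (Suc k)
  then obtain z where "(R ^^ k) x z" "R z y" by (auto elim: relpowp_Suc_E)
  then show ?case using Suc.IH by (meson sym relpowp_Suc_I2)
qed

lemma del_add_sym: "(\<And>x y. E x y \<Longrightarrow> E y x) \<Longrightarrow> del_add E v a b x y \<Longrightarrow> del_add E v a b y x"
  unfolding del_add_def by blast

lemma parity_aux: "(t::nat) \<le> A + D + B \<Longrightarrow> D \<le> 3 \<Longrightarrow> \<not> t \<le> A + B + 1 \<Longrightarrow> odd (t + A + B) \<Longrightarrow> t = A + B + 3"
  by presburger

context qg begin

lemma walk_G':
  assumes aV: "a \<in> V" and bV: "b \<in> V" and xV: "x \<in> V"
  shows "(del_add E v a b ^^ k) x y \<Longrightarrow> y \<in> V \<and> (d x y \<le> k \<or> d x a + d b y + 1 \<le> k \<or> d x b + d a y + 1 \<le> k)"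
proof (induction k arbitrary: y)
  case 0 then show ?case using xV d_refl by auto
next
  case (Suc k)
  then obtain z where z: "(del_add E v a b ^^ k) x z" "del_add E v a b z y" by (auto elim: relpowp_Suc_E)
  have IH: "z \<in> V" "d x z \<le> k \<or> d x a + d b z + 1 \<le> k \<or> d x b + d a z + 1 \<le> k" using Suc.IH[OF z(1)] by auto
  consider (E) "E z y" | (ab) "z = a" "y = b" | (ba) "z = b" "y = a" using z(2) unfolding del_add_def by blast
  then show ?case
  proof cases
    case E
    have "y \<in> V" using E EV by blast
    moreover have "d x y \<le> d x z + 1" "d b y \<le> d b z + 1" "d a y \<le> d a z + 1"
      using d_step[OF xV E] d_step[OF bV E] d_step[OF aV E] by auto
    ultimately show ?thesis using IH(2) by auto
  next
    case ab
    then show ?thesis using IH(2) bV d_refl[of a] d_refl[of b] by auto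
  next
    case ba
    then show ?thesis using IH(2) aV d_refl[of a] d_refl[of b] by auto
  qed
qed

lemma d2: "E p z \<Longrightarrow> E z q \<Longrightarrow> d p q \<le> 2"
proof -
  assume "E p z" "E z q"
  then have "(E ^^ Suc (Suc 0)) p q" by (meson relpowp_0_I relpowp_Suc_I)
  then have "d p q \<le> Suc (Suc 0)" by (rule d_le)
  then show ?thesis by simp
qed

lemma d3: "E p z \<Longrightarrow> E z w \<Longrightarrow> E w q \<Longrightarrow> d p q \<le> 3"
proof -
  assume "E p z" "E z w" "E w q"
  then have "(E ^^ Suc (Suc (Suc 0))) p q" by (meson relpowp_0_I relpowp_Suc_I)
  then have "d p q \<le> Suc (Suc (Suc 0))" by (rule d_le)
  then show ?thesis by simp
qed

definition M where "M a b = {x\<in>V. d x b = d x a + 3}"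

lemma excl:
  assumes "x \<in> M p q" "x \<in> M r s2" "p \<in> V" "q \<in> V" "r \<in> V" "s2 \<in> V" "d p s2 \<le> 2" "d r q \<le> 2"
  shows False
proof -
  have xV: "x \<in> V" using assms unfolding M_def by auto
  have "d x s2 \<le> d x p + d p s2" "d x q \<le> d x r + d r q" using d_tri assms xV by auto
  then show False using assms unfolding M_def by auto
qed

lemma excl2: "x \<in> M a b \<Longrightarrow> x \<in> M b a \<Longrightarrow> False"
  unfolding M_def by auto

end

context qgr begin

abbreviation c where "c x \<equiv> odd (dr x)"

lemma walk_par: "(E ^^ k) x y \<Longrightarrow> x \<in> V \<Longrightarrow> (odd k \<longleftrightarrow> c x \<noteq> c y)"
proof (induction k arbitrary: y)
  case 0 then show ?case by auto
next
  case (Suc k)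
  then obtain z where z: "(E ^^ k) x z" "E z y" by (auto elim: relpowp_Suc_E)
  have "c z \<noteq> c y" using bipartite[OF z(2)] .
  then show ?case using Suc.IH[OF z(1) Suc.prems(2)] by auto
qed

lemma d_par: "x \<in> V \<Longrightarrow> y \<in> V \<Longrightarrow> odd (d x y) \<longleftrightarrow> c x \<noteq> c y"
  using walk_par d_walk by blast

lemma half_bound:
  assumes aV: "a \<in> V" and bV: "b \<in> V" and xV: "x \<in> V" and yV: "y \<in> V"
    and dab: "d a b \<le> 3" and cab: "c a \<noteq> c b" and K: "d x a + d b y + 1 \<le> K"
  shows "real (d x y) - real K \<le> 2 * of_bool (x \<in> M a b \<and> y \<in> M b a)"
proof -
  define t where "t = d x y"
  have t1: "t \<le> d x a + d a b + d b y" unfolding t_def using d_tri aV bV xV yV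
    by (meson add_mono_thms_linordered_semiring(3) le_trans)
  have p1: "odd t \<longleftrightarrow> c x \<noteq> c y" unfolding t_def using d_par xV yV by blast
  have p2: "odd (d x a) \<longleftrightarrow> c x \<noteq> c a" using d_par xV aV by blast
  have p3: "odd (d b y) \<longleftrightarrow> c b \<noteq> c y" using d_par bV yV by blast
  have par: "odd (t + d x a + d b y)" using p1 p2 p3 cab by auto
  show ?thesis
  proof (cases "t \<le> d x a + d b y + 1")
    case True
    then have "real t \<le> real K" using K by linarith
    then show ?thesis unfolding t_def by simp
  next
    case False
    have teq: "t = d x a + d b y + 3" using parity_aux[OF t1 dab False par] .
    have "t \<le> d x b + d b y" unfolding t_def using d_tri xV bV yV by blast
    moreover have "d x b \<le> d x a + d a b" using d_tri xV aV bV by blast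
    ultimately have "d x b = d x a + 3" using teq dab by linarith
    then have xM: "x \<in> M a b" unfolding M_def using xV by simp
    have "t \<le> d x a + d a y" unfolding t_def using d_tri xV aV yV by blast
    moreover have "d a y \<le> d a b + d b y" using d_tri aV bV yV by blast
    ultimately have "d a y = d b y + 3" using teq dab by linarith
    then have "d y a = d y b + 3" using d_sym aV bV yV by simp
    then have yM: "y \<in> M b a" unfolding M_def using yV by simp
    have "real t - real K \<le> 2" using teq K by linarith
    then show ?thesis using xM yM unfolding t_def by simp
  qed
qed

end



lemma helper_pq:
  fixes p q N :: real
  assumes "p \<ge> 0" "q \<ge> 0" "2*p*q > N^2/18"
  shows "p + q > N/3"
proof -
  have e1: "(p+q)^2 = (p-q)^2 + 4*p*q" by (simp add: power2_eq_square algebra_simps)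
  have e2: "(p-q)^2 \<ge> 0" by simp
  have e3: "(N/3)^2 = N^2/9" by (simp add: power_divide)
  have "(N/3)^2 < (p+q)^2" using e1 e2 e3 assms(3) by linarith
  then show ?thesis using power_less_imp_less_base[of "N/3" 2 "p+q"] assms by simp
qed

lemma arith6:
  fixes p1 q1 p2 q2 p3 q3 N :: real
  assumes "p1 \<ge> 0" "q1 \<ge> 0" "p2 \<ge> 0" "q2 \<ge> 0" "p3 \<ge> 0" "q3 \<ge> 0"
    and "p1+q1+p2+q2+p3+q3 \<le> N"
  shows "min (2*p1*q1) (min (2*p2*q2) (2*p3*q3)) \<le> N^2/18"
proof (rule ccontr)
  assume "\<not> ?thesis"
  then have "2*p1*q1 > N^2/18" "2*p2*q2 > N^2/18" "2*p3*q3 > N^2/18" by auto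
  then have "p1+q1 > N/3" "p2+q2 > N/3" "p3+q3 > N/3" using helper_pq assms by auto
  then show False using assms(7) by linarith
qed

lemma lin1: fixes A p q :: real shows "A \<le> 2 * p \<Longrightarrow> 0 \<le> q \<Longrightarrow> A \<le> 2 * (p + q)" by (simp add: distrib_left)
lemma lin2: fixes A p q :: real shows "A \<le> 2 * q \<Longrightarrow> 0 \<le> p \<Longrightarrow> A \<le> 2 * (p + q)" by (simp add: distrib_left)

lemma prodsum:
  assumes "finite W"
  shows "(\<Sum>x\<in>W. \<Sum>y\<in>W. (of_bool (x \<in> A \<and> y \<in> B) :: real)) = real (card (W \<inter> A)) * real (card (W \<inter> B))"
proof -
  have "(\<Sum>x\<in>W. \<Sum>y\<in>W. (of_bool (x \<in> A \<and> y \<in> B) :: real)) = (\<Sum>x\<in>W. \<Sum>y\<in>W. (of_bool (x \<in> A) :: real) * of_bool (y \<in> B))"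
    by (simp add: of_bool_conj)
  also have "\<dots> = (\<Sum>x\<in>W. (of_bool (x \<in> A) :: real)) * (\<Sum>y\<in>W. of_bool (y \<in> B))"
    by (rule sum_product[symmetric])
  also have "\<dots> = real (card (W \<inter> A)) * real (card (W \<inter> B))"
    using assms by (simp add: Int_def)
  finally show ?thesis .
qed

context qg begin

lemma connG':
  assumes vV: "v \<in> V" and Nv: "nbrs E v = {v1,v2,v3}"
    and e: "E v2 v6" "E v6 v1" "E v3 v4" "E v4 v1" and ne: "v4 \<noteq> v" "v6 \<noteq> v"
  shows "x \<in> V - {v} \<Longrightarrow> \<exists>k. (del_add E v a b ^^ k) x v1"
proof (induction "d x v1" arbitrary: x rule: less_induct)
  case less
  have Ev: "E v v1" "E v v2" "E v v3" using Nv unfolding nbrs_def by auto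
  have v1V: "v1 \<in> V" and v1v: "v1 \<noteq> v" using Ev EV Eirr by metis+
  have v2v: "v2 \<noteq> v" "v3 \<noteq> v" using Ev Eirr by metis+
  have xV: "x \<in> V" "x \<noteq> v" using less.prems by auto
  show ?case
  proof (cases "x = v1")
    case True
    then show ?thesis by (meson relpowp_0_I)
  next
    case False
    then have "d x v1 \<noteq> 0" using d_zero xV v1V by blast
    then obtain m where m: "d x v1 = Suc m" by (cases "d x v1") auto
    have "(E ^^ Suc m) x v1" using d_walk[OF xV(1) v1V] m by simp
    then obtain z where z: "E x z" "(E ^^ m) z v1" using relpowp_Suc_D2 by metis
    show ?thesis
    proof (cases "z = v")
      case False
      have "d z v1 < d x v1" using d_le[OF z(2)] m by simp
      moreover have "z \<in> V - {v}" using z EV False by blast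
      ultimately obtain k where "(del_add E v a b ^^ k) z v1" using less.hyps by blast
      moreover have "del_add E v a b x z" using z xV False unfolding del_add_def by blast
      ultimately show ?thesis by (meson relpowp_Suc_I2)
    next
      case True
      then have "x \<in> {v1,v2,v3}" using z Nv Esym unfolding nbrs_def by blast
      then have "x = v2 \<or> x = v3" using \<open>x \<noteq> v1\<close> by blast
      then show ?thesis
      proof
        assume x2: "x = v2"
        have "del_add E v a b v2 v6" "del_add E v a b v6 v1"
          using e ne v2v v1v unfolding del_add_def by auto
        then have "(del_add E v a b ^^ Suc (Suc 0)) v2 v1" by (meson relpowp_0_I relpowp_Suc_I)
        then show ?thesis using x2 by blast
      next
        assume x3: "x = v3"
        have "del_add E v a b v3 v4" "del_add E v a b v4 v1"
          using e ne v2v v1v unfolding del_add_def by auto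
        then have "(del_add E v a b ^^ Suc (Suc 0)) v3 v1" by (meson relpowp_0_I relpowp_Suc_I)
        then show ?thesis using x3 by blast
      qed
    qed
  qed
qed

end

context qgr begin

lemma pointwise:
  assumes aV: "a \<in> V" and bV: "b \<in> V" and dab: "d a b \<le> 3" and cab: "c a \<noteq> c b"
    and xV: "x \<in> V" and yV: "y \<in> V" and w: "\<exists>k. (del_add E v a b ^^ k) x y"
  shows "real (d x y) - real (gdist (del_add E v a b) x y)
     \<le> 2 * (of_bool (x \<in> M a b \<and> y \<in> M b a) + of_bool (x \<in> M b a \<and> y \<in> M a b))"
proof -
  define K where "K = gdist (del_add E v a b) x y"
  have wK: "(del_add E v a b ^^ K) x y" unfolding K_def gdist_def using w by (metis LeastI_ex)
  have dba: "d b a \<le> 3" using dab d_sym aV bV by simp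
  from walk_G'[OF aV bV xV wK]
  have "d x y \<le> K \<or> d x a + d b y + 1 \<le> K \<or> d x b + d a y + 1 \<le> K" by blast
  then have "real (d x y) - real K
     \<le> 2 * (of_bool (x \<in> M a b \<and> y \<in> M b a) + of_bool (x \<in> M b a \<and> y \<in> M a b))"
  proof (elim disjE)
    assume "d x y \<le> K"
    then have "real (d x y) - real K \<le> 0" by simp
    moreover have "0 \<le> 2 * ((of_bool (x \<in> M a b \<and> y \<in> M b a) :: real) + of_bool (x \<in> M b a \<and> y \<in> M a b))" by simp
    ultimately show ?thesis by linarith
  next
    assume "d x a + d b y + 1 \<le> K"
    from half_bound[OF aV bV xV yV dab cab this]
    have "real (d x y) - real K \<le> 2 * of_bool (x \<in> M a b \<and> y \<in> M b a)" .
    moreover have "0 \<le> (of_bool (x \<in> M b a \<and> y \<in> M a b) :: real)" by simp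
    ultimately show ?thesis by (rule lin1)
  next
    assume "d x b + d a y + 1 \<le> K"
    from half_bound[OF bV aV xV yV dba cab[symmetric] this]
    have "real (d x y) - real K \<le> 2 * of_bool (x \<in> M b a \<and> y \<in> M a b)" .
    moreover have "0 \<le> (of_bool (x \<in> M a b \<and> y \<in> M b a) :: real)" by simp
    ultimately show ?thesis by (rule lin2)
  qed
  then show ?thesis unfolding K_def .
qed

lemma dec_bound:
  assumes aV: "a \<in> V" and bV: "b \<in> V" and dab: "d a b \<le> 3" and cab: "c a \<noteq> c b"
    and cn: "\<And>x y. x \<in> V - {v} \<Longrightarrow> y \<in> V - {v} \<Longrightarrow> \<exists>k. (del_add E v a b ^^ k) x y"
  shows "dec V v E (del_add E v a b) \<le> 2 * real (card ((V - {v}) \<inter> M a b)) * real (card ((V - {v}) \<inter> M b a))"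
proof -
  define W where "W = V - {v}"
  have finW: "finite W" unfolding W_def using finV by simp
  have "(\<Sum>u\<in>W. \<Sum>w\<in>W. real (gdist E u w) - real (gdist (del_add E v a b) u w))
      \<le> (\<Sum>u\<in>W. \<Sum>w\<in>W. 2 * (of_bool (u \<in> M a b \<and> w \<in> M b a) + of_bool (u \<in> M b a \<and> w \<in> M a b)))"
    by (intro sum_mono pointwise[OF aV bV dab cab]) (use cn in \<open>auto simp: W_def\<close>)
  also have "\<dots> = 2 * ((\<Sum>u\<in>W. \<Sum>w\<in>W. (of_bool (u \<in> M a b \<and> w \<in> M b a) :: real))
                     + (\<Sum>u\<in>W. \<Sum>w\<in>W. (of_bool (u \<in> M b a \<and> w \<in> M a b) :: real)))"
    by (simp add: sum.distrib sum_distrib_left)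
  also have "\<dots> = 4 * (real (card (W \<inter> M a b)) * real (card (W \<inter> M b a)))"
    using prodsum[OF finW] by simp
  finally show ?thesis unfolding dec_def W_def by simp
qed

end



theorem claim1:
  fixes V :: "'a set" and E :: "'a \<Rightarrow> 'a \<Rightarrow> bool" and rot :: "'a \<Rightarrow> 'a \<Rightarrow> 'a"
    and v v1 v2 v3 v4 v5 v6 :: 'a
  assumes quad: "quadrangulation V E rot"
    and mindeg: "\<forall>x\<in>V. card (nbrs E x) \<ge> 3"
    and vV: "v \<in> V"
    and Nv: "nbrs E v = {v1, v2, v3}" and dist3: "distinct [v1, v2, v3]"
    and f1: "face_walk rot v1 v v3 v4"
    and f2: "face_walk rot v2 v v3 v5"
    and f3: "face_walk rot v1 v v2 v6"
    and good: "\<not> E v1 v5" "\<not> E v2 v4" "\<not> E v3 v6"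
  shows "Min {dec V v E (del_add E v v1 v5), dec V v E (del_add E v v2 v4),
              dec V v E (del_add E v v3 v6)} \<le> (real (card V) - 1)^2 / 18"
proof -
  interpret G: qgr V E rot v
    by (intro qgr.intro qg.intro qgr_axioms.intro quad vV)
  have Ev: "E v v1" "E v v2" "E v v3" using Nv unfolding nbrs_def by auto
  have Ev': "E v1 v" "E v2 v" "E v3 v" using Ev G.Esym by auto
  have F1: "E v3 v4" "E v4 v1" "distinct [v1,v,v3,v4]" using G.face_walk_facts[OF f1 Ev'(1)] by auto
  have F2: "E v3 v5" "E v5 v2" "distinct [v2,v,v3,v5]" using G.face_walk_facts[OF f2 Ev'(2)] by auto
  have F3: "E v2 v6" "E v6 v1" "distinct [v1,v,v2,v6]" using G.face_walk_facts[OF f3 Ev'(1)] by auto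
  have inV: "v1 \<in> V" "v2 \<in> V" "v3 \<in> V" "v4 \<in> V" "v5 \<in> V" "v6 \<in> V"
    using Ev F1 F2 F3 G.EV by blast+
  have c1: "G.c v1 \<noteq> G.c v" "G.c v2 \<noteq> G.c v" "G.c v3 \<noteq> G.c v"
    using G.bipartite Ev' by auto
  have c2: "G.c v4 \<noteq> G.c v3" "G.c v5 \<noteq> G.c v3" "G.c v6 \<noteq> G.c v1"
    using G.bipartite F1 F2 F3 G.Esym by blast+
  have cab: "G.c v1 \<noteq> G.c v5" "G.c v2 \<noteq> G.c v4" "G.c v3 \<noteq> G.c v6" using c1 c2 by auto
  have dab: "G.d v1 v5 \<le> 3" "G.d v2 v4 \<le> 3" "G.d v3 v6 \<le> 3"
    using G.d3[OF Ev'(1) Ev(3) F2(1)] G.d3[OF Ev'(2) Ev(3) F1(1)] G.d3[OF Ev'(3) Ev(1) G.Esym[OF F3(2)]]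
    by auto
  have ne: "v4 \<noteq> v" "v6 \<noteq> v" using F1(3) F3(3) by auto
  have cn: "\<exists>k. (del_add E v a b ^^ k) x y" if x: "x \<in> V - {v}" and y: "y \<in> V - {v}" for a b x y
  proof -
    obtain k1 where k1: "(del_add E v a b ^^ k1) x v1" using G.connG'[OF vV Nv F3(1) F3(2) F1(1) F1(2) ne x] by blast
    obtain k2 where "(del_add E v a b ^^ k2) y v1" using G.connG'[OF vV Nv F3(1) F3(2) F1(1) F1(2) ne y] by blast
    then have k2: "(del_add E v a b ^^ k2) v1 y"
      by (rule walk_sym_gen[rotated]) (rule del_add_sym[OF G.Esym])
    show ?thesis using relpowp_trans[OF k1 k2] by blast
  qed
  define W where "W = V - {v}"
  define p1 where "p1 = real (card (W \<inter> G.M v1 v5))"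
  define q1 where "q1 = real (card (W \<inter> G.M v5 v1))"
  define p2 where "p2 = real (card (W \<inter> G.M v2 v4))"
  define q2 where "q2 = real (card (W \<inter> G.M v4 v2))"
  define p3 where "p3 = real (card (W \<inter> G.M v3 v6))"
  define q3 where "q3 = real (card (W \<inter> G.M v6 v3))"
  have D1: "dec V v E (del_add E v v1 v5) \<le> 2 * p1 * q1"
    unfolding p1_def q1_def W_def using G.dec_bound[OF inV(1) inV(5) dab(1) cab(1) cn] by blast
  have D2: "dec V v E (del_add E v v2 v4) \<le> 2 * p2 * q2"
    unfolding p2_def q2_def W_def using G.dec_bound[OF inV(2) inV(4) dab(2) cab(2) cn] by blast
  have D3: "dec V v E (del_add E v v3 v6) \<le> 2 * p3 * q3"
    unfolding p3_def q3_def W_def using G.dec_bound[OF inV(3) inV(6) dab(3) cab(3) cn] by blast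
  have de: "G.d p q \<le> 2 \<and> G.d q p \<le> 2" if "E p q" for p q
    using G.d_edge[OF that] G.d_edge[OF G.Esym[OF that]] by simp
  have dp: "G.d p q \<le> 2 \<and> G.d q p \<le> 2" if "E p z" "E z q" for p q z
    using G.d2[OF that] G.d2[OF G.Esym[OF that(2)] G.Esym[OF that(1)]] by simp
  have d12: "G.d v1 v2 \<le> 2 \<and> G.d v2 v1 \<le> 2" using dp[OF Ev'(1) Ev(2)] .
  have d14: "G.d v1 v4 \<le> 2 \<and> G.d v4 v1 \<le> 2" using de[OF G.Esym[OF F1(2)]] .
  have d25: "G.d v2 v5 \<le> 2 \<and> G.d v5 v2 \<le> 2" using de[OF G.Esym[OF F2(2)]] .
  have d45: "G.d v4 v5 \<le> 2 \<and> G.d v5 v4 \<le> 2" using dp[OF G.Esym[OF F1(1)] F2(1)] .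
  have d13: "G.d v1 v3 \<le> 2 \<and> G.d v3 v1 \<le> 2" using dp[OF Ev'(1) Ev(3)] .
  have d16: "G.d v1 v6 \<le> 2 \<and> G.d v6 v1 \<le> 2" using de[OF G.Esym[OF F3(2)]] .
  have d35: "G.d v3 v5 \<le> 2 \<and> G.d v5 v3 \<le> 2" using de[OF F2(1)] .
  have d56: "G.d v5 v6 \<le> 2 \<and> G.d v6 v5 \<le> 2" using dp[OF F2(2) F3(1)] .
  have d23: "G.d v2 v3 \<le> 2 \<and> G.d v3 v2 \<le> 2" using dp[OF Ev'(2) Ev(3)] .
  have d26: "G.d v2 v6 \<le> 2 \<and> G.d v6 v2 \<le> 2" using de[OF F3(1)] .
  have d34: "G.d v3 v4 \<le> 2 \<and> G.d v4 v3 \<le> 2" using de[OF F1(1)] .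
  have d46: "G.d v4 v6 \<le> 2 \<and> G.d v6 v4 \<le> 2" using dp[OF F1(2) G.Esym[OF F3(2)]] .
  note dd = d12 d14 d25 d45 d13 d16 d35 d56 d23 d26 d34 d46
  have one: "of_bool (x \<in> G.M v1 v5) + of_bool (x \<in> G.M v5 v1) + of_bool (x \<in> G.M v2 v4)
      + of_bool (x \<in> G.M v4 v2) + of_bool (x \<in> G.M v3 v6) + of_bool (x \<in> G.M v6 v3) \<le> (1::real)" for x
  proof -
    have a: "\<not> (x \<in> G.M p q \<and> x \<in> G.M r s2)"
      if "p \<in> V" "q \<in> V" "r \<in> V" "s2 \<in> V" "G.d p s2 \<le> 2" "G.d r q \<le> 2" for p q r s2
      using G.excl that by blast
    have b: "\<not> (x \<in> G.M p q \<and> x \<in> G.M q p)" for p q using G.excl2 by blast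
    note ab = a[OF inV(1) inV(5) inV(2) inV(4)] a[OF inV(1) inV(5) inV(4) inV(2)]
      a[OF inV(5) inV(1) inV(2) inV(4)] a[OF inV(5) inV(1) inV(4) inV(2)]
      a[OF inV(1) inV(5) inV(3) inV(6)] a[OF inV(1) inV(5) inV(6) inV(3)]
      a[OF inV(5) inV(1) inV(3) inV(6)] a[OF inV(5) inV(1) inV(6) inV(3)]
      a[OF inV(2) inV(4) inV(3) inV(6)] a[OF inV(2) inV(4) inV(6) inV(3)]
      a[OF inV(4) inV(2) inV(3) inV(6)] a[OF inV(4) inV(2) inV(6) inV(3)]
      b[of v1 v5] b[of v2 v4] b[of v3 v6]
    have ex: "\<not> (x \<in> G.M v1 v5 \<and> x \<in> G.M v2 v4)" "\<not> (x \<in> G.M v1 v5 \<and> x \<in> G.M v4 v2)"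
      "\<not> (x \<in> G.M v5 v1 \<and> x \<in> G.M v2 v4)" "\<not> (x \<in> G.M v5 v1 \<and> x \<in> G.M v4 v2)"
      "\<not> (x \<in> G.M v1 v5 \<and> x \<in> G.M v3 v6)" "\<not> (x \<in> G.M v1 v5 \<and> x \<in> G.M v6 v3)"
      "\<not> (x \<in> G.M v5 v1 \<and> x \<in> G.M v3 v6)" "\<not> (x \<in> G.M v5 v1 \<and> x \<in> G.M v6 v3)"
      "\<not> (x \<in> G.M v2 v4 \<and> x \<in> G.M v3 v6)" "\<not> (x \<in> G.M v2 v4 \<and> x \<in> G.M v6 v3)"
      "\<not> (x \<in> G.M v4 v2 \<and> x \<in> G.M v3 v6)" "\<not> (x \<in> G.M v4 v2 \<and> x \<in> G.M v6 v3)"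
      "\<not> (x \<in> G.M v1 v5 \<and> x \<in> G.M v5 v1)" "\<not> (x \<in> G.M v2 v4 \<and> x \<in> G.M v4 v2)"
      "\<not> (x \<in> G.M v3 v6 \<and> x \<in> G.M v6 v3)"
      using ab dd by auto
    show ?thesis using ex
      by (cases "x \<in> G.M v1 v5"; cases "x \<in> G.M v5 v1"; cases "x \<in> G.M v2 v4";
          cases "x \<in> G.M v4 v2"; cases "x \<in> G.M v3 v6"; cases "x \<in> G.M v6 v3"; simp)
  qed
  have finW: "finite W" unfolding W_def using G.finV by simp
  have cardA: "real (card (W \<inter> A)) = (\<Sum>x\<in>W. of_bool (x \<in> A))" for A
    using finW by (simp add: Int_def)
  have "p1 + q1 + p2 + q2 + p3 + q3 = (\<Sum>x\<in>W. of_bool (x \<in> G.M v1 v5) + of_bool (x \<in> G.M v5 v1) + of_bool (x \<in> G.M v2 v4)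
      + of_bool (x \<in> G.M v4 v2) + of_bool (x \<in> G.M v3 v6) + of_bool (x \<in> G.M v6 v3))"
    unfolding p1_def q1_def p2_def q2_def p3_def q3_def cardA by (simp add: sum.distrib)
  also have "\<dots> \<le> (\<Sum>x\<in>W. (1::real))" by (rule sum_mono) (rule one)
  also have "\<dots> = real (card V) - 1"
  proof -
    have cV: "card V \<ge> 1" using vV G.finV card_gt_0_iff by (metis One_nat_def Suc_leI empty_iff)
    then show ?thesis unfolding W_def using vV G.finV by (simp add: of_nat_diff)
  qed
  finally have sum6: "p1 + q1 + p2 + q2 + p3 + q3 \<le> real (card V) - 1" .
  have nn: "p1 \<ge> 0" "q1 \<ge> 0" "p2 \<ge> 0" "q2 \<ge> 0" "p3 \<ge> 0" "q3 \<ge> 0"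
    unfolding p1_def q1_def p2_def q2_def p3_def q3_def by simp_all
  have fin: "min (2*p1*q1) (min (2*p2*q2) (2*p3*q3)) \<le> (real (card V) - 1)^2/18"
    using arith6[OF nn sum6] .
  have "Min {dec V v E (del_add E v v1 v5), dec V v E (del_add E v v2 v4), dec V v E (del_add E v v3 v6)}
      = min (dec V v E (del_add E v v1 v5)) (min (dec V v E (del_add E v v2 v4)) (dec V v E (del_add E v v3 v6)))"
    by simp
  also have "\<dots> \<le> min (2*p1*q1) (min (2*p2*q2) (2*p3*q3))"
    using D1 D2 D3 by (meson min.mono)
  finally show ?thesis using fin by linarith
qed



end
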